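(* For integers $n,k$, let $B(n,k)$ be the number of partitions $\lambda\in\mathcal{H}_n$ with $\mathrm{even}(\lambda)=k$ (so $B(n,k)=0$ if $k<0$ or $n\le 0$). Then $B(1,0)=1$ and for all $n\ge 2$ and all integers $k$, $$B(n,k)=B(n-1,k)+B(n-1,k-1)+B(n-2,k)-B(n-2,k-1).$$
   Context: A partition is a finite nonempty weakly decreasing sequence $\lambda=(\lambda_1,\ldots,\lambda_k)$ of positive integers; $\ell(\lambda)=k$ is its number of parts. The perimeter is $\Gamma(\lambda)=\lambda_1+\ell(\lambda)-1$; $\mathcal{H}_n$ is the set of partitions with perimeter $n$ (empty for $n\le 0$). $\mathrm{even}(\lambda)=|\{1\le i\le \ell(\lambda):\lambda_i\text{ is even}\}|$. *)

theory Defs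
  imports Main
begin

definition is_partition :: "nat list \<Rightarrow> bool" where
  "is_partition xs \<longleftrightarrow> xs \<noteq> [] \<and> sorted_wrt (\<ge>) xs \<and> (\<forall>x\<in>set xs. 0 < x)"

definition perimeter :: "nat list \<Rightarrow> int" where
  "perimeter xs = int (hd xs) + int (length xs) - 1"

definition H :: "int \<Rightarrow> nat list set" where
  "H n = {xs. is_partition xs \<and> perimeter xs = n}"

definition num_even :: "nat list \<Rightarrow> nat" where
  "num_even xs = length (filter even xs)"

definition B :: "int \<Rightarrow> int \<Rightarrow> int" where
  "B n k = int (card {xs \<in> H n. int (num_even xs) = k})"

end

theory Submission
  imports Defs
begin

definition dupp :: "nat list \<Rightarrow> nat list" where "dupp ys = hd ys # ys"
definition incc :: "nat list \<Rightarrow> nat list" where "incc ys = Suc (hd ys) # tl ys"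

lemma H_nonempty_list: "xs \<in> H n \<Longrightarrow> \<exists>y ys. xs = y # ys \<and> y > 0 \<and> (\<forall>z\<in>set ys. z \<le> y \<and> 0 < z) \<and> sorted_wrt (\<ge>) ys \<and> n = int y + int (length ys)"
  unfolding H_def is_partition_def perimeter_def
  by (cases xs) auto

lemma H_Cons_iff: "(y # ys) \<in> H n \<longleftrightarrow> y > 0 \<and> (\<forall>z\<in>set ys. z \<le> y \<and> 0 < z) \<and> sorted_wrt (\<ge>) ys \<and> n = int y + int (length ys)"
  unfolding H_def is_partition_def perimeter_def by auto

lemma H_empty: "n \<le> 0 \<Longrightarrow> H n = {}"
  using H_nonempty_list by fastforce

lemma H_finite: "finite (H n)"
proof -
  have "H n \<subseteq> {xs. set xs \<subseteq> {0..nat n} \<and> length xs \<le> nat n}"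
  proof
    fix xs assume "xs \<in> H n"
    then obtain y ys where "xs = y # ys" "y > 0" "\<forall>z\<in>set ys. z \<le> y \<and> 0 < z" "n = int y + int (length ys)"
      using H_nonempty_list by blast
    then show "xs \<in> {xs. set xs \<subseteq> {0..nat n} \<and> length xs \<le> nat n}" by auto
  qed
  moreover have "finite {xs. set xs \<subseteq> {0..nat n} \<and> length xs \<le> nat n}"
    by (rule finite_lists_length_le) auto
  ultimately show ?thesis by (rule finite_subset)
qed

lemma dupp_H: "ys \<in> H n \<Longrightarrow> dupp ys \<in> H (n + 1)"
  by (auto dest!: H_nonempty_list simp: H_Cons_iff dupp_def)

lemma incc_H: "ys \<in> H n \<Longrightarrow> incc ys \<in> H (n + 1)"
  by (auto dest!: H_nonempty_list simp: H_Cons_iff incc_def le_SucI)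

lemma H_split:
  assumes "n \<ge> 1"
  shows "H (n + 1) = dupp ` H n \<union> incc ` H n"
proof
  show "dupp ` H n \<union> incc ` H n \<subseteq> H (n + 1)" using dupp_H incc_H by auto
next
  show "H (n + 1) \<subseteq> dupp ` H n \<union> incc ` H n"
  proof
    fix xs assume xs: "xs \<in> H (n + 1)"
    then obtain y ys where d: "xs = y # ys" "y > 0" "\<forall>z\<in>set ys. z \<le> y \<and> 0 < z" "sorted_wrt (\<ge>) ys" "n + 1 = int y + int (length ys)"
      using H_nonempty_list by blast
    show "xs \<in> dupp ` H n \<union> incc ` H n"
    proof (cases "ys \<noteq> [] \<and> hd ys = y")
      case True
      then obtain ys' where ys: "ys = y # ys'" by (cases ys) auto
      have "ys \<in> H n" using d ys by (auto simp: H_Cons_iff)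
      moreover have "xs = dupp ys" using d ys by (simp add: dupp_def)
      ultimately show ?thesis by blast
    next
      case False
      have "y \<ge> 2"
      proof (cases ys)
        case Nil then show ?thesis using d assms by auto
      next
        case (Cons z zs) then show ?thesis using d False by force
      qed
      have "\<forall>z\<in>set ys. z \<le> y - 1"
      proof
        fix z assume z: "z \<in> set ys"
        show "z \<le> y - 1"
        proof (cases ys)
          case Nil then show ?thesis using z by auto
        next
          case (Cons w ws)
          then have "w \<noteq> y" "w \<le> y" using False d by auto
          moreover have "z \<le> w" using z Cons d(4) by auto
          ultimately show ?thesis by auto
        qed
      qed
      then have "(y - 1) # ys \<in> H n" using d \<open>y \<ge> 2\<close> by (auto simp: H_Cons_iff)
      moreover have "xs = incc ((y - 1) # ys)" using d \<open>y \<ge> 2\<close> by (simp add: incc_def)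
      ultimately show ?thesis by blast
    qed
  qed
qed

lemma dupp_inj: "inj_on dupp A"
  by (rule inj_onI) (simp add: dupp_def)

lemma incc_inj: "A \<subseteq> H n \<Longrightarrow> inj_on incc A"
proof (rule inj_onI)
  fix x y assume "x \<in> A" "y \<in> A" "incc x = incc y" "A \<subseteq> H n"
  then obtain a as b bs where "x = a # as" "y = b # bs"
    using H_nonempty_list by (metis subsetD)
  then show "x = y" using \<open>incc x = incc y\<close> by (simp add: incc_def)
qed

lemma dupp_incc_disj: "ys \<in> H n \<Longrightarrow> zs \<in> H m \<Longrightarrow> dupp ys \<noteq> incc zs"
proof
  assume "ys \<in> H n" "zs \<in> H m" "dupp ys = incc zs"
  then obtain a as b bs where a: "ys = a # as" "zs = b # bs" "\<forall>z\<in>set bs. z \<le> b"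
    using H_nonempty_list by metis
  with \<open>dupp ys = incc zs\<close> show False by (auto simp: dupp_def incc_def)
qed

lemma card_split:
  assumes "n \<ge> 1"
  shows "card {xs \<in> H (n + 1). Q xs} = card {ys \<in> H n. Q (dupp ys)} + card {ys \<in> H n. Q (incc ys)}"
proof -
  have e: "{xs \<in> H (n + 1). Q xs} = dupp ` {ys \<in> H n. Q (dupp ys)} \<union> incc ` {ys \<in> H n. Q (incc ys)}"
    using H_split[OF assms] by auto
  have "card (dupp ` {ys \<in> H n. Q (dupp ys)} \<union> incc ` {ys \<in> H n. Q (incc ys)})
      = card (dupp ` {ys \<in> H n. Q (dupp ys)}) + card (incc ` {ys \<in> H n. Q (incc ys)})"
    by (rule card_Un_disjoint) (use H_finite dupp_incc_disj in auto)
  also have "\<dots> = card {ys \<in> H n. Q (dupp ys)} + card {ys \<in> H n. Q (incc ys)}"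
    by (subst card_image[OF dupp_inj], subst card_image[OF incc_inj[of _ n]]) auto
  finally show ?thesis using e by simp
qed

definition C :: "int \<Rightarrow> int \<Rightarrow> bool \<Rightarrow> int" where
  "C n k p = int (card {xs \<in> H n. int (num_even xs) = k \<and> even (hd xs) = p})"

lemma B_C: "B n k = C n k True + C n k False"
proof -
  have "{xs \<in> H n. int (num_even xs) = k} = {xs \<in> H n. int (num_even xs) = k \<and> even (hd xs) = True}
     \<union> {xs \<in> H n. int (num_even xs) = k \<and> even (hd xs) = False}" by auto
  then have "card {xs \<in> H n. int (num_even xs) = k} = card {xs \<in> H n. int (num_even xs) = k \<and> even (hd xs) = True}
     + card {xs \<in> H n. int (num_even xs) = k \<and> even (hd xs) = False}"
    by (simp, subst card_Un_disjoint) (use H_finite in auto)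
  then show ?thesis unfolding B_def C_def by simp
qed

lemma ne_dupp: "ys \<in> H n \<Longrightarrow> int (num_even (dupp ys)) = int (num_even ys) + (if even (hd ys) then 1 else 0) \<and> hd (dupp ys) = hd ys"
  by (auto dest!: H_nonempty_list simp: dupp_def num_even_def)

lemma ne_incc: "ys \<in> H n \<Longrightarrow> int (num_even (incc ys)) = int (num_even ys) + (if even (hd ys) then -1 else 1) \<and> even (hd (incc ys)) = odd (hd ys)"
  by (auto dest!: H_nonempty_list simp: incc_def num_even_def)

lemma C_step:
  assumes "n \<ge> 1"
  shows "C (n + 1) k True = B n (k - 1)"
    and "C (n + 1) k False = C n k False + C n (k + 1) True"
proof -
  have "C (n + 1) k True = int (card {ys \<in> H n. int (num_even (dupp ys)) = k \<and> even (hd (dupp ys)) = True})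
     + int (card {ys \<in> H n. int (num_even (incc ys)) = k \<and> even (hd (incc ys)) = True})"
    unfolding C_def using card_split[OF assms] by simp
  also have "{ys \<in> H n. int (num_even (dupp ys)) = k \<and> even (hd (dupp ys)) = True}
      = {ys \<in> H n. int (num_even ys) = k - 1 \<and> even (hd ys) = True}"
    using ne_dupp by force
  also have "{ys \<in> H n. int (num_even (incc ys)) = k \<and> even (hd (incc ys)) = True}
      = {ys \<in> H n. int (num_even ys) = k - 1 \<and> even (hd ys) = False}"
    using ne_incc by force
  finally show "C (n + 1) k True = B n (k - 1)" by (simp add: B_C C_def)
next
  have "C (n + 1) k False = int (card {ys \<in> H n. int (num_even (dupp ys)) = k \<and> even (hd (dupp ys)) = False})
     + int (card {ys \<in> H n. int (num_even (incc ys)) = k \<and> even (hd (incc ys)) = False})"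
    unfolding C_def using card_split[OF assms] by simp
  also have "{ys \<in> H n. int (num_even (dupp ys)) = k \<and> even (hd (dupp ys)) = False}
      = {ys \<in> H n. int (num_even ys) = k \<and> even (hd ys) = False}"
    using ne_dupp by force
  also have "{ys \<in> H n. int (num_even (incc ys)) = k \<and> even (hd (incc ys)) = False}
      = {ys \<in> H n. int (num_even ys) = k + 1 \<and> even (hd ys) = True}"
    using ne_incc by force
  finally show "C (n + 1) k False = C n k False + C n (k + 1) True" by (simp add: C_def)
qed

lemma H1: "H 1 = {[1]}"
proof
  show "H 1 \<subseteq> {[1]}"
  proof
    fix xs assume "xs \<in> H 1"
    then obtain y ys where "xs = y # ys" "y > 0" "1 = int y + int (length ys)"
      using H_nonempty_list by blast
    then show "xs \<in> {[1]}" by (cases ys) auto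
  qed
  show "{[1]} \<subseteq> H 1" by (simp add: H_Cons_iff)
qed

lemma C_True_gen: "n \<ge> 1 \<Longrightarrow> C n k True = B (n - 1) (k - 1)"
proof (cases "n = 1")
  case True
  have "C 1 k True = 0" unfolding C_def H1 by auto
  moreover have "B 0 (k - 1) = 0" unfolding B_def by (simp add: H_empty)
  ultimately show ?thesis using True by simp
next
  case False
  assume "n \<ge> 1"
  then show ?thesis using C_step(1)[of "n - 1" k] False by simp
qed

theorem lemma2p2:
  shows "B 1 0 = 1 \<and>
    (\<forall>n k. n \<ge> 2 \<longrightarrow> B n k = B (n - 1) k + B (n - 1) (k - 1) + B (n - 2) k - B (n - 2) (k - 1))"
proof
  have "{xs \<in> H 1. int (num_even xs) = 0} = {[1]}" unfolding H1 by (auto simp: num_even_def)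
  then show "B 1 0 = 1" unfolding B_def by simp
next
  show "\<forall>n k. n \<ge> 2 \<longrightarrow> B n k = B (n - 1) k + B (n - 1) (k - 1) + B (n - 2) k - B (n - 2) (k - 1)"
  proof (intro allI impI)
    fix n k :: int assume n: "n \<ge> 2"
    have m: "n - 1 \<ge> 1" using n by simp
    have a: "C n k True = B (n - 1) (k - 1)" using C_True_gen[of n k] n by simp
    have b: "C n k False = C (n - 1) k False + C (n - 1) (k + 1) True"
      using C_step(2)[OF m, of k] by simp
    have c: "C (n - 1) (k + 1) True = B (n - 2) k" using C_True_gen[OF m, of "k + 1"] by simp
    have d: "C (n - 1) k True = B (n - 2) (k - 1)" using C_True_gen[OF m, of k] by simp
    have e: "B (n - 1) k = C (n - 1) k True + C (n - 1) k False" by (rule B_C)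
    show "B n k = B (n - 1) k + B (n - 1) (k - 1) + B (n - 2) k - B (n - 2) (k - 1)"
      using B_C[of n k] a b c d e by simp
  qed
qed

end
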